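(* For any frame $L$, the poset $\overline{\mathrm{IC}}(L)$ is order-isomorphic to $\{g\in\mathrm{IC}(L)\mid \boldsymbol{-1}\le g\le\boldsymbol{1}\}$.
   Context: $\mathbb{Q}$ is the rationals. The frame of extended partial reals $\mathfrak{L}(\overline{\mathbb{IR}})$ is the frame presented by generators $(r,\textsf{---})$, $(\textsf{---},s)$ ($r,s\in\mathbb{Q}$) subject to (r1) $(r,\textsf{---})\wedge(\textsf{---},s)=0$ whenever $r\ge s$; (r3) $(r,\textsf{---})=\bigvee_{s>r}(s,\textsf{---})$; (r4) $(\textsf{---},s)=\bigvee_{r<s}(\textsf{---},r)$. The frame of partial reals $\mathfrak{L}(\mathbb{IR})$ is obtained by adding the relations (r5) $\bigvee_r(r,\textsf{---})=1$ and (r6) $\bigvee_s(\textsf{---},s)=1$. $\overline{\mathrm{IC}}(L)$ (resp. $\mathrm{IC}(L)$) is the set of frame homomorphisms $\mathfrak{L}(\overline{\mathbb{IR}})\to L$ (resp. $\mathfrak{L}(\mathbb{IR})\to L$), ordered by $f\le g$ iff $f(r,\textsf{---})\le g(r,\textsf{---})$ and $g(\textsf{---},s)\le f(\textsf{---},s)$ for all $r,s\in\mathbb{Q}$. For $q\in\mathbb{Q}$, the constant $\boldsymbol{q}\in\mathrm{IC}(L)$ is given by $\boldsymbol{q}(p,\textsf{---})=1$ if $p<q$ and $0$ otherwise, $\boldsymbol{q}(\textsf{---},p)=1$ if $p>q$ and $0$ otherwise. *)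

theory Defs
  imports Main "HOL.Rat"
begin

definition frame_law :: "'a::complete_lattice itself \<Rightarrow> bool" where
  "frame_law _ \<longleftrightarrow> (\<forall>(a::'a) S. inf a (Sup S) = (SUP s\<in>S. inf a s))"

text \<open>A frame homomorphism out of a presented frame is determined by (and corresponds
  bijectively to) the images of the generators, subject to the relations holding in L.
  A pair (lo, up) represents the homomorphism f with f(r,---) = lo r and f(---,s) = up s.\<close>
type_synonym 'a genmap = "(rat \<Rightarrow> 'a) \<times> (rat \<Rightarrow> 'a)"

definition ICbar :: "('a::complete_lattice) genmap set" where
  "ICbar = {f. (\<forall>r s. s \<le> r \<longrightarrow> inf (fst f r) (snd f s) = bot)
              \<and> (\<forall>r. fst f r = Sup {fst f s | s. r < s})
              \<and> (\<forall>s. snd f s = Sup {snd f r | r. r < s})}"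

definition IC :: "('a::complete_lattice) genmap set" where
  "IC = {f. f \<in> ICbar \<and> Sup (range (fst f)) = top \<and> Sup (range (snd f)) = top}"

definition IC_le :: "('a::complete_lattice) genmap \<Rightarrow> 'a genmap \<Rightarrow> bool" where
  "IC_le f g \<longleftrightarrow> (\<forall>r. fst f r \<le> fst g r) \<and> (\<forall>s. snd g s \<le> snd f s)"

definition const_pr :: "rat \<Rightarrow> ('a::complete_lattice) genmap" where
  "const_pr q = ((\<lambda>p. if p < q then top else bot), (\<lambda>p. if q < p then top else bot))"

end

theory Submission
  imports Defs
begin

definition hh :: "rat \<Rightarrow> rat" where "hh x = x / (1 + \<bar>x\<bar>)"
definition kk :: "rat \<Rightarrow> rat" where "kk y = y / (1 - \<bar>y\<bar>)"
lemma hh_mono: "x < y \<Longrightarrow> hh x < hh y"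
  using mult_neg_pos[of x "1+2*y"]
  unfolding hh_def by (cases "0 \<le> x"; cases "0 \<le> y") (auto simp: divide_simps algebra_simps)
lemma hh_less[simp]: "hh x < hh y \<longleftrightarrow> x < y"
  by (metis hh_mono linorder_neq_iff order_less_asym)
lemma hh_bounds: "-1 < hh x" "hh x < 1"
  unfolding hh_def by (cases "0 \<le> x"; auto simp: divide_simps)+
lemma hh_kk: "-1 < y \<Longrightarrow> y < 1 \<Longrightarrow> hh (kk y) = y"
  unfolding hh_def kk_def by (cases "0 \<le> y") (auto simp: divide_simps abs_if)

lemma frame_disj:
  assumes fl: "frame_law TYPE('a::complete_lattice)"
    and H: "\<And>a b. a \<in> A \<Longrightarrow> b \<in> B \<Longrightarrow> inf a b = (bot::'a)"
  shows "inf (Sup A) (Sup B) = bot"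
proof -
  have d: "\<And>(a::'a) S. inf a (Sup S) = (SUP s\<in>S. inf a s)" using fl unfolding frame_law_def by blast
  have "inf (Sup A) (Sup B) = (SUP b\<in>B. inf (Sup A) b)" by (rule d)
  also have "\<dots> = (SUP b\<in>B. inf b (Sup A))" by (simp add: inf_commute)
  also have "\<dots> = (SUP b\<in>B. SUP a\<in>A. inf b a)" by (simp add: d)
  also have "\<dots> = bot"
  proof -
    have H': "\<And>a b. b \<in> B \<Longrightarrow> a \<in> A \<Longrightarrow> inf b a = bot" using H inf_commute by metis
    show ?thesis by (simp add: H')
  qed
  finally show ?thesis .
qed

definition phi :: "('a::complete_lattice) genmap \<Rightarrow> 'a genmap" where
  "phi f = ((\<lambda>r. if r < -1 then top else Sup {fst f t | t. r < hh t}),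
            (\<lambda>s. if 1 < s then top else Sup {snd f t | t. hh t < s}))"

lemma phi_fst: "fst (phi f) r = (if r < -1 then top else Sup {fst f t | t. r < hh t})"
  by (simp add: phi_def)
lemma phi_snd: "snd (phi f) s = (if 1 < s then top else Sup {snd f t | t. hh t < s})"
  by (simp add: phi_def)

lemma ICbarD:
  assumes "f \<in> ICbar"
  shows "\<And>r s. s \<le> r \<Longrightarrow> inf (fst f r) (snd f s) = bot"
    "\<And>r. fst f r = Sup {fst f s | s. r < s}"
    "\<And>s. snd f s = Sup {snd f r | r. r < s}"
  using assms unfolding ICbar_def by blast+

lemma recover_fst: "f \<in> ICbar \<Longrightarrow> fst (phi f) (hh t) = fst f t"
  using hh_bounds(1)[of t] ICbarD(2)[of f t]
  by (simp add: phi_fst not_less_iff_gr_or_eq)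
lemma recover_snd: "f \<in> ICbar \<Longrightarrow> snd (phi f) (hh t) = snd f t"
  using hh_bounds(2)[of t] ICbarD(3)[of f t]
  by (simp add: phi_snd not_less_iff_gr_or_eq)

lemma empty_fst: "1 \<le> r \<Longrightarrow> {fst f t | t. r < hh t} = {}"
  using hh_bounds(2) by (auto, meson less_trans not_less)
lemma empty_snd: "s \<le> -1 \<Longrightarrow> {snd f t | t. hh t < s} = {}"
  using hh_bounds(1) by (auto, meson less_trans not_less)

lemma phi_ICbar:
  assumes fl: "frame_law TYPE('a::complete_lattice)" and f: "(f::'a genmap) \<in> ICbar"
  shows "phi f \<in> ICbar"
  unfolding ICbar_def
proof (intro CollectI conjI allI impI)
  fix r s :: rat assume sr: "s \<le> r"
  show "inf (fst (phi f) r) (snd (phi f) s) = bot"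
  proof (cases "r < -1")
    case True
    then have "s \<le> -1" using sr by simp
    then show ?thesis using sr by (simp add: phi_snd empty_snd)
  next
    case False
    note F = False
    show ?thesis
    proof (cases "1 < s")
      case True
      then have "1 \<le> r" using sr by simp
      then show ?thesis by (simp add: phi_fst empty_fst)
    next
      case False
      have "inf (Sup {fst f t | t. r < hh t}) (Sup {snd f t | t. hh t < s}) = bot"
      proof (rule frame_disj[OF fl])
        fix a b assume "a \<in> {fst f t | t. r < hh t}" "b \<in> {snd f t | t. hh t < s}"
        then obtain t t' where "a = fst f t" "r < hh t" "b = snd f t'" "hh t' < s" by blast
        then have "t' \<le> t" using sr by (metis hh_less less_le_trans not_less order.strict_trans1 order_less_imp_le)
        then show "inf a b = bot" using ICbarD(1)[OF f] \<open>a = _\<close> \<open>b = _\<close> by blast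
      qed
      then show ?thesis using F False by (simp add: phi_fst phi_snd)
    qed
  qed
next
  fix r :: rat
  show "fst (phi f) r = Sup {fst (phi f) s | s. r < s}"
  proof (cases "r < -1")
    case True
    obtain s where "r < s" "s < -1" using dense True by blast
    then have "top \<in> {fst (phi f) s | s. r < s}" by (force simp: phi_fst)
    then have "Sup {fst (phi f) s | s. r < s} = top" by (meson Sup_upper top_le)
    then show ?thesis using True by (simp add: phi_fst)
  next
    case False
    show ?thesis
    proof (rule antisym)
      have e: "fst (phi f) r = Sup {fst f t | t. r < hh t}" using False by (simp add: phi_fst)
      show "fst (phi f) r \<le> Sup {fst (phi f) s | s. r < s}"
        unfolding e
      proof (intro Sup_least)
        fix x assume "x \<in> {fst f t | t. r < hh t}"
        then obtain t where t: "x = fst f t" "r < hh t" by blast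
        obtain s where s: "r < s" "s < hh t" using dense t(2) by blast
        have "x \<le> fst (phi f) s" using False s t by (auto simp: phi_fst intro!: Sup_upper)
        also have "\<dots> \<le> Sup {fst (phi f) s | s. r < s}" using s by (auto intro!: Sup_upper)
        finally show "x \<le> Sup {fst (phi f) s | s. r < s}" .
      qed
    next
      show "Sup {fst (phi f) s | s. r < s} \<le> fst (phi f) r"
      proof (rule Sup_least)
        fix x assume "x \<in> {fst (phi f) s | s. r < s}"
        then obtain s where s: "x = fst (phi f) s" "r < s" by blast
        then show "x \<le> fst (phi f) r" using False
          by (auto simp: phi_fst intro!: Sup_subset_mono)
      qed
    qed
  qed
next
  fix s :: rat
  show "snd (phi f) s = Sup {snd (phi f) r | r. r < s}"
  proof (cases "1 < s")
    case True
    obtain r where "r < s" "1 < r" using dense True by blast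
    then have "top \<in> {snd (phi f) r | r. r < s}" by (force simp: phi_snd)
    then have "Sup {snd (phi f) r | r. r < s} = top" by (meson Sup_upper top_le)
    then show ?thesis using True by (simp add: phi_snd)
  next
    case False
    show ?thesis
    proof (rule antisym)
      have e: "snd (phi f) s = Sup {snd f t | t. hh t < s}" using False by (simp add: phi_snd)
      show "snd (phi f) s \<le> Sup {snd (phi f) r | r. r < s}"
        unfolding e
      proof (intro Sup_least)
        fix x assume "x \<in> {snd f t | t. hh t < s}"
        then obtain t where t: "x = snd f t" "hh t < s" by blast
        obtain r where r: "hh t < r" "r < s" using dense t(2) by blast
        have "x \<le> snd (phi f) r" using False r t by (auto simp: phi_snd intro!: Sup_upper)
        also have "\<dots> \<le> Sup {snd (phi f) r | r. r < s}" using r by (auto intro!: Sup_upper)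
        finally show "x \<le> Sup {snd (phi f) r | r. r < s}" .
      qed
    next
      show "Sup {snd (phi f) r | r. r < s} \<le> snd (phi f) s"
      proof (rule Sup_least)
        fix x assume "x \<in> {snd (phi f) r | r. r < s}"
        then obtain r where r: "x = snd (phi f) r" "r < s" by blast
        then show "x \<le> snd (phi f) s" using False
          by (auto simp: phi_snd intro!: Sup_subset_mono)
      qed
    qed
  qed
qed

lemma phi_IC:
  assumes fl: "frame_law TYPE('a::complete_lattice)" and f: "(f::'a genmap) \<in> ICbar"
  shows "phi f \<in> IC"
proof -
  have "fst (phi f) (-2) = top" by (simp add: phi_fst)
  then have "top \<le> Sup (range (fst (phi f)))" by (metis rangeI Sup_upper)
  moreover have "snd (phi f) 2 = top" by (simp add: phi_snd)
  then have "top \<le> Sup (range (snd (phi f)))" by (metis rangeI Sup_upper)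
  ultimately show ?thesis using phi_ICbar[OF fl f] unfolding IC_def by (simp add: top_le)
qed

lemma phi_lo: "IC_le (const_pr (-1)) (phi f)"
  unfolding IC_le_def const_pr_def by (auto simp: phi_fst phi_snd empty_snd)

lemma phi_hi: "IC_le (phi f) (const_pr 1)"
  unfolding IC_le_def const_pr_def by (auto simp: phi_fst phi_snd empty_fst)

lemma phi_mono: "IC_le f g \<Longrightarrow> IC_le (phi f) (phi g)"
  unfolding IC_le_def phi_fst phi_snd
  by (auto intro!: Sup_mono)

lemma key_fst:
  assumes g: "g \<in> ICbar" and b: "\<And>s. 1 \<le> s \<Longrightarrow> fst g s = bot" and r: "-1 \<le> r"
  shows "Sup {fst g (hh t) | t. r < hh t} = fst g r"
proof (rule antisym)
  show "Sup {fst g (hh t) | t. r < hh t} \<le> fst g r"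
  proof -
    have "{fst g (hh t) | t. r < hh t} \<subseteq> {fst g s | s. r < s}" by blast
    then have "Sup {fst g (hh t) | t. r < hh t} \<le> Sup {fst g s | s. r < s}" by (rule Sup_subset_mono)
    then show ?thesis using ICbarD(2)[OF g, of r] by simp
  qed
next
  have "Sup {fst g s | s. r < s} \<le> Sup {fst g (hh t) | t. r < hh t}"
  proof (rule Sup_least)
    fix x assume "x \<in> {fst g s | s. r < s}"
    then obtain s where s: "x = fst g s" "r < s" by blast
    show "x \<le> Sup {fst g (hh t) | t. r < hh t}"
    proof (cases "1 \<le> s")
      case True then show ?thesis using s b by simp
    next
      case False
      then have "hh (kk s) = s" using r s by (intro hh_kk) auto
      then have "x \<in> {fst g (hh t) | t. r < hh t}" using s by (metis (mono_tags, lifting) mem_Collect_eq)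
      then show ?thesis by (rule Sup_upper)
    qed
  qed
  then show "fst g r \<le> Sup {fst g (hh t) | t. r < hh t}"
    using ICbarD(2)[OF g, of r] by simp
qed

lemma key_snd:
  assumes g: "g \<in> ICbar" and b: "\<And>s. s \<le> -1 \<Longrightarrow> snd g s = bot" and r: "r \<le> 1"
  shows "Sup {snd g (hh t) | t. hh t < r} = snd g r"
proof (rule antisym)
  show "Sup {snd g (hh t) | t. hh t < r} \<le> snd g r"
  proof -
    have "{snd g (hh t) | t. hh t < r} \<subseteq> {snd g s | s. s < r}" by blast
    then have "Sup {snd g (hh t) | t. hh t < r} \<le> Sup {snd g s | s. s < r}" by (rule Sup_subset_mono)
    then show ?thesis using ICbarD(3)[OF g, of r] by simp
  qed
next
  have "Sup {snd g s | s. s < r} \<le> Sup {snd g (hh t) | t. hh t < r}"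
  proof (rule Sup_least)
    fix x assume "x \<in> {snd g s | s. s < r}"
    then obtain s where s: "x = snd g s" "s < r" by blast
    show "x \<le> Sup {snd g (hh t) | t. hh t < r}"
    proof (cases "s \<le> -1")
      case True then show ?thesis using s b by simp
    next
      case False
      then have "hh (kk s) = s" using r s by (intro hh_kk) auto
      then have "x \<in> {snd g (hh t) | t. hh t < r}" using s by (metis (mono_tags, lifting) mem_Collect_eq)
      then show ?thesis by (rule Sup_upper)
    qed
  qed
  then show "snd g r \<le> Sup {snd g (hh t) | t. hh t < r}"
    using ICbarD(3)[OF g, of r] by simp
qed


lemma phi_surj:
  assumes g: "g \<in> {g \<in> IC. IC_le (const_pr (-1)) g \<and> IC_le g (const_pr 1)}"
  shows "\<exists>f\<in>ICbar. phi f = (g::('a::complete_lattice) genmap)"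
proof -
  have gI: "g \<in> ICbar" using g unfolding IC_def by simp
  have lo: "IC_le (const_pr (-1)) g" and hi: "IC_le g (const_pr 1)" using g by auto
  have bfst: "fst g s = bot" if "1 \<le> s" for s
  proof -
    have "fst g s \<le> fst (const_pr 1) s" using hi unfolding IC_le_def by blast
    with that show ?thesis by (simp add: const_pr_def bot_unique)
  qed
  have bsnd: "snd g s = bot" if "s \<le> -1" for s
  proof -
    have "snd g s \<le> snd (const_pr (-1)) s" using lo unfolding IC_le_def by blast
    with that show ?thesis by (simp add: const_pr_def bot_unique)
  qed
  have tfst: "fst g s = top" if "s < -1" for s
  proof -
    have "fst (const_pr (-1)) s \<le> fst g s" using lo unfolding IC_le_def by blast
    with that show ?thesis by (simp add: const_pr_def top_le)
  qed
  have tsnd: "snd g s = top" if "1 < s" for s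
  proof -
    have "snd (const_pr 1) s \<le> snd g s" using hi unfolding IC_le_def by blast
    with that show ?thesis by (simp add: const_pr_def top_le)
  qed
  define f0 :: "'a genmap" where "f0 = ((\<lambda>t. fst g (hh t)), (\<lambda>t. snd g (hh t)))"
  have f0I: "f0 \<in> ICbar"
    unfolding ICbar_def
  proof (intro CollectI conjI allI impI)
    fix r s :: rat assume "s \<le> r"
    then have "hh s \<le> hh r" by (metis hh_less not_less)
    then show "inf (fst f0 r) (snd f0 s) = bot" unfolding f0_def using ICbarD(1)[OF gI] by simp
  next
    fix r :: rat
    have "fst f0 r = Sup {fst g (hh t) | t. hh r < hh t}"
      unfolding f0_def using key_fst[OF gI bfst, of "hh r"] hh_bounds(1)[of r] by simp
    also have "\<dots> = Sup {fst f0 s | s. r < s}" unfolding f0_def by simp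
    finally show "fst f0 r = Sup {fst f0 s | s. r < s}" .
  next
    fix r :: rat
    have "snd f0 r = Sup {snd g (hh t) | t. hh t < hh r}"
      unfolding f0_def using key_snd[OF gI bsnd, of "hh r"] hh_bounds(2)[of r] by simp
    also have "\<dots> = Sup {snd f0 s | s. s < r}" unfolding f0_def by simp
    finally show "snd f0 r = Sup {snd f0 s | s. s < r}" .
  qed
  have "fst (phi f0) = fst g"
  proof
    fix r show "fst (phi f0) r = fst g r"
    proof (cases "r < -1")
      case True then show ?thesis by (simp add: phi_fst tfst)
    next
      case False then show ?thesis
        using key_fst[OF gI bfst, of r] by (simp add: phi_fst f0_def)
    qed
  qed
  moreover have "snd (phi f0) = snd g"
  proof
    fix r show "snd (phi f0) r = snd g r"
    proof (cases "1 < r")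
      case True then show ?thesis by (simp add: phi_snd tsnd)
    next
      case False then show ?thesis
        using key_snd[OF gI bsnd, of r] by (simp add: phi_snd f0_def)
    qed
  qed
  ultimately have "phi f0 = g" by (simp add: prod_eq_iff)
  then show ?thesis using f0I by blast
qed

theorem proposition3p1:
  assumes "frame_law TYPE('a::complete_lattice)"
  shows "\<exists>\<phi> :: 'a genmap \<Rightarrow> 'a genmap.
           bij_betw \<phi> ICbar {g \<in> IC. IC_le (const_pr (-1)) g \<and> IC_le g (const_pr 1)}
         \<and> (\<forall>f\<in>ICbar. \<forall>g\<in>ICbar. IC_le f g \<longleftrightarrow> IC_le (\<phi> f) (\<phi> g))"
proof (intro exI[of _ phi] conjI ballI)
  show "bij_betw phi ICbar {g \<in> IC. IC_le (const_pr (-1)) g \<and> IC_le (g::'a genmap) (const_pr 1)}"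
    unfolding bij_betw_def
  proof (intro conjI)
    show "inj_on phi (ICbar :: 'a genmap set)"
    proof (rule inj_onI)
      fix f g :: "'a genmap" assume f: "f \<in> ICbar" and g: "g \<in> ICbar" and e: "phi f = phi g"
      have "fst f t = fst g t" for t using recover_fst[OF f, of t] recover_fst[OF g, of t] e by simp
      moreover have "snd f t = snd g t" for t using recover_snd[OF f, of t] recover_snd[OF g, of t] e by simp
      ultimately show "f = g" by (simp add: prod_eq_iff fun_eq_iff)
    qed
    show "phi ` ICbar = {g \<in> IC. IC_le (const_pr (-1)) g \<and> IC_le (g::'a genmap) (const_pr 1)}"
    proof
      show "phi ` ICbar \<subseteq> {g \<in> IC. IC_le (const_pr (-1)) g \<and> IC_le (g::'a genmap) (const_pr 1)}"
        using phi_IC[OF assms] phi_lo phi_hi by blast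
      show "{g \<in> IC. IC_le (const_pr (-1)) g \<and> IC_le (g::'a genmap) (const_pr 1)} \<subseteq> phi ` ICbar"
        using phi_surj by blast
    qed
  qed
next
  fix f g :: "'a genmap" assume f: "f \<in> ICbar" and g: "g \<in> ICbar"
  show "IC_le f g \<longleftrightarrow> IC_le (phi f) (phi g)"
  proof
    assume "IC_le f g" then show "IC_le (phi f) (phi g)" by (rule phi_mono)
  next
    assume h: "IC_le (phi f) (phi g)"
    have "fst f r \<le> fst g r" for r
      using h recover_fst[OF f, of r] recover_fst[OF g, of r] unfolding IC_le_def by (metis)
    moreover have "snd g r \<le> snd f r" for r
      using h recover_snd[OF f, of r] recover_snd[OF g, of r] unfolding IC_le_def by (metis)
    ultimately show "IC_le f g" unfolding IC_le_def by blast
  qed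
qed

end
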